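(* For all $n\ge1$, $|\mathbf{I}_n(000)|=\dfrac{(n+1)!-d_{n+1}}{n}$, where $d_m$ is the number of derangements (fixed-point-free permutations) of $[m]$.
   Context: An inversion sequence of length $n$ is an integer sequence $e=e_1\dots e_n$ with $0\le e_i<i$ for all $i$; $\mathbf{I}_n$ denotes the set of these. $\mathbf{I}_n(000)$ is the set of $e\in\mathbf{I}_n$ with no $i$ such that $e_i=e_{i+1}=e_{i+2}$ (i.e. avoiding the consecutive pattern $000$). *)

theory Defs
  imports Complex_Main "HOL-Combinatorics.Permutations"
begin

text \<open>Inversion sequences of length n, as lists e (0-indexed): the paper's e_i is e ! (i-1),
  so the condition 0 \<le> e_i < i becomes e ! i < i + 1.\<close>
definition inv_seqs :: "nat \<Rightarrow> nat list set" where
  "inv_seqs n = {e. length e = n \<and> (\<forall>i<n. e ! i < i + 1)}"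

definition inv_seqs_000 :: "nat \<Rightarrow> nat list set" where
  "inv_seqs_000 n = {e \<in> inv_seqs n.
     \<not> (\<exists>i. i + 2 < n \<and> e ! i = e ! (i + 1) \<and> e ! (i + 1) = e ! (i + 2))}"

definition num_derangements :: "nat \<Rightarrow> nat" where
  "num_derangements m = card {p. p permutes {1..m} \<and> (\<forall>x\<in>{1..m}. p x \<noteq> x)}"

end

theory Submission
  imports Defs
begin


definition D :: "nat set \<Rightarrow> (nat \<Rightarrow> nat) set" where
  "D A = {p. p permutes A \<and> (\<forall>x\<in>A. p x \<noteq> x)}"

lemma D_insert:
  assumes fin: "finite A" and aA: "a \<notin> A"
  shows "D (insert a A) = (\<lambda>(b,q). transpose a b \<circ> q) ` ((SIGMA b:A. D (A - {b})) \<union> (A \<times> D A))"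
proof (rule set_eqI, rule iffI)
  fix p assume "p \<in> D (insert a A)"
  hence p: "p permutes insert a A" and der: "\<And>x. x \<in> insert a A \<Longrightarrow> p x \<noteq> x" by (auto simp: D_def)
  define b where "b = p a"
  define q where "q = transpose a b \<circ> p"
  have bA: "b \<in> A" using p der[of a] unfolding b_def
    by (metis insertE insertI1 permutes_in_image)
  have qA: "q permutes A" unfolding q_def b_def by (rule permutes_insert_lemma[OF p])
  have pq: "p = transpose a b \<circ> q" unfolding q_def by (simp add: fun_eq_iff)
  have inj: "\<And>x y. p x = p y \<Longrightarrow> x = y" using p by (metis permutes_inj injD)
  show "p \<in> (\<lambda>(b,q). transpose a b \<circ> q) ` ((SIGMA b:A. D (A - {b})) \<union> (A \<times> D A))"
  proof (cases "p b = a")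
    case True
    have "q b = b" unfolding q_def using True by simp
    hence q2: "q permutes A - {b}" using qA by (intro permutes_superset[OF qA]) auto
    have "\<forall>x\<in>A - {b}. q x \<noteq> x"
    proof
      fix x assume x: "x \<in> A - {b}"
      hence "x \<noteq> a" using aA by auto
      show "q x \<noteq> x"
      proof
        assume qx: "q x = x"
        show False
        proof (cases "p x = a")
          case True thus False using \<open>p b = a\<close> inj x by auto
        next
          case False
          show False
          proof (cases "p x = b")
            case True thus False using inj[of x a] b_def \<open>x \<noteq> a\<close> by auto
          next
            case False
            hence "q x = p x" using \<open>p x \<noteq> a\<close> unfolding q_def by (simp add: transpose_def)
            thus False using qx der[of x] x by auto
          qed
        qed
      qed
    qed
    hence "(b, q) \<in> (SIGMA b:A. D (A - {b}))" using bA q2 by (auto simp: D_def)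
    thus ?thesis using pq by force
  next
    case False
    have "\<forall>x\<in>A. q x \<noteq> x"
    proof
      fix x assume x: "x \<in> A"
      hence "x \<noteq> a" using aA by auto
      show "q x \<noteq> x"
      proof
        assume qx: "q x = x"
        show False
        proof (cases "p x = a")
          case True
          hence "q x = b" unfolding q_def by simp
          thus False using qx True False by simp
        next
          case False
          show False
          proof (cases "p x = b")
            case True thus False using inj[of x a] b_def \<open>x \<noteq> a\<close> by auto
          next
            case False
            hence "q x = p x" using \<open>p x \<noteq> a\<close> unfolding q_def by (simp add: transpose_def)
            thus False using qx der[of x] x by auto
          qed
        qed
      qed
    qed
    hence "(b, q) \<in> A \<times> D A" using bA qA by (auto simp: D_def)
    thus ?thesis using pq by force
  qed
next
  fix p assume "p \<in> (\<lambda>(b,q). transpose a b \<circ> q) ` ((SIGMA b:A. D (A - {b})) \<union> (A \<times> D A))"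
  then obtain b q where pq: "p = transpose a b \<circ> q" and bA: "b \<in> A"
     and qq: "(q permutes A - {b} \<and> (\<forall>x\<in>A-{b}. q x \<noteq> x)) \<or> (q permutes A \<and> (\<forall>x\<in>A. q x \<noteq> x))"
    by (auto simp: D_def)
  have qA: "q permutes A" using qq by (meson Diff_subset permutes_subset)
  have qa: "q a = a" using qA aA by (simp add: permutes_not_in)
  have qinj: "\<And>x y. q x = q y \<Longrightarrow> x = y" using qA by (metis permutes_inj injD)
  have "p permutes insert a A" unfolding pq
    by (rule permutes_compose[OF permutes_subset[OF qA] permutes_swap_id]) (use bA in auto)
  moreover have "\<forall>x\<in>insert a A. p x \<noteq> x"
  proof
    fix x assume x: "x \<in> insert a A"
    show "p x \<noteq> x"
    proof (cases "x = a")
      case True thus ?thesis using qa bA aA pq by auto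
    next
      case False
      hence xA: "x \<in> A" using x by auto
      show ?thesis
      proof (cases "q x = b")
        case True thus ?thesis using pq False by simp
      next
        case qb: False
        have "q x \<noteq> a" using qa qinj False by metis
        hence "p x = q x" using pq qb by (simp add: transpose_def)
        moreover have "q x \<noteq> x" using qq xA qb by auto
        ultimately show ?thesis by simp
      qed
    qed
  qed
  ultimately show "p \<in> D (insert a A)" by (simp add: D_def)
qed

lemma D_inj:
  assumes fin: "finite A" and aA: "a \<notin> A"
  shows "inj_on (\<lambda>(b,q). transpose a b \<circ> q) ((SIGMA b:A. D (A - {b})) \<union> (A \<times> D A))"
proof (rule inj_onI, clarify)
  fix b q b' q'
  assume m1: "(b, q) \<in> (SIGMA b:A. D (A - {b})) \<union> (A \<times> D A)"
     and m2: "(b', q') \<in> (SIGMA b:A. D (A - {b})) \<union> (A \<times> D A)"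
     and e: "transpose a b \<circ> q = transpose a b' \<circ> q'"
  have "q permutes A" using m1 by (auto simp: D_def intro: permutes_subset)
  hence qa: "q a = a" using aA by (simp add: permutes_not_in)
  have "q' permutes A" using m2 by (auto simp: D_def intro: permutes_subset)
  hence qa': "q' a = a" using aA by (simp add: permutes_not_in)
  have "b = b'" using fun_cong[OF e, of a] qa qa' by simp
  moreover have "q = q'"
  proof
    fix x
    have "transpose a b (q x) = transpose a b (q' x)" using fun_cong[OF e, of x] \<open>b = b'\<close> by simp
    thus "q x = q' x" by (metis transpose_involutory)
  qed
  ultimately show "b = b' \<and> q = q'" by simp
qed

lemma finite_D: "finite A \<Longrightarrow> finite (D A)"
  unfolding D_def by (rule finite_subset[OF _ finite_permutations]) auto

lemma card_D_insert:
  assumes fin: "finite A" and aA: "a \<notin> A"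
  shows "card (D (insert a A)) = (\<Sum>b\<in>A. card (D (A - {b}))) + card A * card (D A)"
proof -
  have disj: "(SIGMA b:A. D (A - {b})) \<inter> (A \<times> D A) = {}"
    by (auto simp: D_def permutes_not_in)
  have "card (D (insert a A)) = card ((SIGMA b:A. D (A - {b})) \<union> (A \<times> D A))"
    unfolding D_insert[OF assms] by (rule card_image[OF D_inj[OF assms]])
  also have "\<dots> = card (SIGMA b:A. D (A - {b})) + card (A \<times> D A)"
    by (rule card_Un_disjoint) (use fin disj in \<open>auto intro!: finite_SigmaI finite_D\<close>)
  also have "\<dots> = (\<Sum>b\<in>A. card (D (A - {b}))) + card A * card (D A)"
    using fin by (simp add: card_SigmaI finite_D card_cartesian_product)
  finally show ?thesis .
qed

lemma card_D_eq:
  assumes "finite A" "finite B" "card A = card B"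
  shows "card (D A) = card (D B)"
proof -
  obtain f where "bij_betw f A B" using assms finite_same_card_bij by blast
  from bij_betw_derangements[OF this] show ?thesis unfolding D_def by (rule bij_betw_same_card)
qed

lemma nd_card: "finite A \<Longrightarrow> card (D A) = num_derangements (card A)"
  unfolding num_derangements_def D_def[symmetric] by (rule card_D_eq) auto

lemma nd_rec: "num_derangements (k + 2) = (k + 1) * (num_derangements (k + 1) + num_derangements k)"
proof -
  have "num_derangements (k+2) = card (D (insert (k+2) {1..k+1}))"
    using nd_card[of "insert (k+2) {1..k+1}"] by simp
  also have "\<dots> = (\<Sum>b\<in>{1..k+1}. card (D ({1..k+1} - {b}))) + (k+1) * card (D {1..k+1})"
    by (subst card_D_insert) auto
  also have "\<dots> = (\<Sum>b\<in>{1..k+1}. num_derangements k) + (k+1) * num_derangements (k+1)"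
    by (simp add: nd_card)
  finally show ?thesis by (simp add: algebra_simps)
qed

lemma nd0: "num_derangements 0 = 1"
  unfolding num_derangements_def by simp

lemma nd1: "num_derangements 1 = 0"
  unfolding num_derangements_def by simp

definition dbl :: "nat \<Rightarrow> nat list \<Rightarrow> bool" where
  "dbl n e = (2 \<le> n \<and> e!(n-2) = e!(n-1))"

lemma snoc_mem:
  assumes len: "length e = n"
  shows "e @ [x] \<in> inv_seqs_000 (Suc n) \<longleftrightarrow>
         e \<in> inv_seqs_000 n \<and> x \<le> n \<and> \<not> (dbl n e \<and> x = e!(n-1))"
proof -
  have i1: "(\<forall>i<Suc n. (e@[x]) ! i < i + 1) \<longleftrightarrow> (\<forall>i<n. e ! i < i + 1) \<and> x \<le> n"
    using len by (auto simp: nth_append less_Suc_eq)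
  let ?P = "\<lambda>f i. f ! i = f ! (i + 1) \<and> f ! (i + 1) = f ! (i + 2)"
  have i2: "(\<exists>i. i + 2 < Suc n \<and> ?P (e@[x]) i) \<longleftrightarrow>
        (\<exists>i. i + 2 < n \<and> ?P e i) \<or> (dbl n e \<and> x = e!(n-1))"
  proof
    assume "\<exists>i. i + 2 < Suc n \<and> ?P (e@[x]) i"
    then obtain i where i: "i + 2 < Suc n" "?P (e@[x]) i" by blast
    show "(\<exists>i. i + 2 < n \<and> ?P e i) \<or> (dbl n e \<and> x = e!(n-1))"
    proof (cases "i + 2 < n")
      case True thus ?thesis using i len by (auto simp: nth_append)
    next
      case False
      hence "i + 2 = n" using i by simp
      thus ?thesis using i len by (auto simp: nth_append dbl_def)
    qed
  next
    assume "(\<exists>i. i + 2 < n \<and> ?P e i) \<or> (dbl n e \<and> x = e!(n-1))"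
    thus "\<exists>i. i + 2 < Suc n \<and> ?P (e@[x]) i"
    proof
      assume "\<exists>i. i + 2 < n \<and> ?P e i"
      then obtain i where "i + 2 < n" "?P e i" by blast
      thus ?thesis using len by (intro exI[of _ i]) (auto simp: nth_append)
    next
      assume d: "dbl n e \<and> x = e!(n-1)"
      then obtain m where m: "n = m + 2" by (auto simp: dbl_def dest: le_Suc_ex)
      show ?thesis using d len m
        by (intro exI[of _ "m"]) (auto simp: nth_append dbl_def)
    qed
  qed
  show ?thesis
    unfolding inv_seqs_000_def inv_seqs_def using len i1 i2 by auto
qed

lemma len_A: "e \<in> inv_seqs_000 n \<Longrightarrow> length e = n"
  by (simp add: inv_seqs_000_def inv_seqs_def)

lemma A_step: "inv_seqs_000 (Suc n) = (\<lambda>(e,x). e@[x]) `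
   (SIGMA e: inv_seqs_000 n. {x. x \<le> n \<and> \<not> (dbl n e \<and> x = e!(n-1))})"
proof (rule set_eqI, rule iffI)
  fix f assume f: "f \<in> inv_seqs_000 (Suc n)"
  hence "length f = Suc n" by (rule len_A)
  then obtain e x where fe: "f = e @ [x]" and le: "length e = n"
    by (metis length_Suc_conv_rev)
  show "f \<in> (\<lambda>(e,x). e@[x]) ` (SIGMA e: inv_seqs_000 n. {x. x \<le> n \<and> \<not> (dbl n e \<and> x = e!(n-1))})"
    using f snoc_mem[OF le, of x] fe by force
next
  fix f assume "f \<in> (\<lambda>(e,x). e@[x]) ` (SIGMA e: inv_seqs_000 n. {x. x \<le> n \<and> \<not> (dbl n e \<and> x = e!(n-1))})"
  then obtain e x where fe: "f = e @ [x]" and e: "e \<in> inv_seqs_000 n"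
     and x: "x \<le> n \<and> \<not> (dbl n e \<and> x = e!(n-1))" by auto
  show "f \<in> inv_seqs_000 (Suc n)" using snoc_mem[OF len_A[OF e], of x] fe e x by simp
qed

lemma inj_snoc: "inj_on (\<lambda>(e,x). e@[x]) S"
  by (rule inj_onI) auto

lemma finite_A: "finite (inv_seqs_000 n)"
proof (induction n)
  case 0
  have "inv_seqs_000 0 \<subseteq> {[]}" by (auto simp: inv_seqs_000_def inv_seqs_def)
  thus ?case by (rule finite_subset) simp
next
  case (Suc n)
  show ?case unfolding A_step by (intro finite_imageI finite_SigmaI Suc) auto
qed

definition G :: "nat \<Rightarrow> nat list set" where
  "G n = {e \<in> inv_seqs_000 n. dbl n e}"

lemma card_A_step:
  "card (inv_seqs_000 (Suc n)) + card (G n) = (n + 1) * card (inv_seqs_000 n)"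
proof -
  let ?S = "inv_seqs_000 n"
  have c: "card {x. x \<le> n \<and> \<not> (dbl n e \<and> x = e!(n-1))} = (if dbl n e then n else n + 1)"
    if e: "e \<in> ?S" for e
  proof (cases "dbl n e")
    case True
    hence "n \<ge> 2" by (simp add: dbl_def)
    have "\<forall>i<n. e!i < i+1" using e unfolding inv_seqs_000_def inv_seqs_def by auto
    moreover have "n-1 < n" using \<open>n \<ge> 2\<close> by simp
    ultimately have "e!(n-1) < n-1+1" by blast
    hence "e!(n-1) < n" using \<open>n \<ge> 2\<close> by simp
    hence "{x. x \<le> n \<and> \<not> (dbl n e \<and> x = e!(n-1))} = {..n} - {e!(n-1)}" using True by auto
    thus ?thesis using True \<open>e!(n-1) < n\<close> by simp
  next
    case False
    hence "{x. x \<le> n \<and> \<not> (dbl n e \<and> x = e!(n-1))} = {..n}" by auto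
    thus ?thesis using False by simp
  qed
  have "card (inv_seqs_000 (Suc n)) = (\<Sum>e\<in>?S. card {x. x \<le> n \<and> \<not> (dbl n e \<and> x = e!(n-1))})"
    unfolding A_step by (subst card_image[OF inj_snoc], rule card_SigmaI) (auto simp: finite_A)
  also have "\<dots> = (\<Sum>e\<in>?S. (if dbl n e then n else n + 1))"
    using c by (rule sum.cong[OF refl])
  finally have 1: "card (inv_seqs_000 (Suc n)) = (\<Sum>e\<in>?S. (if dbl n e then n else n + 1))" .
  have "card (inv_seqs_000 (Suc n)) + card (G n) = (\<Sum>e\<in>?S. (if dbl n e then n else n + 1)) + (\<Sum>e\<in>?S. (if dbl n e then 1 else 0))"
    unfolding 1 G_def using finite_A by (simp add: sum.If_cases Int_def)
  also have "\<dots> = (\<Sum>e\<in>?S. (n + 1))" by (subst sum.distrib[symmetric]) (rule sum.cong, auto)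
  finally show ?thesis by simp
qed

lemma G_step:
  assumes "n \<ge> 1"
  shows "card (G (Suc n)) + card (G n) = card (inv_seqs_000 n)"
proof -
  let ?S = "inv_seqs_000 n"
  have "G (Suc n) = (\<lambda>(e,x). e@[x]) ` (SIGMA e: ?S - G n. {e!(n-1)})"
  proof (rule set_eqI, rule iffI)
    fix f assume f: "f \<in> G (Suc n)"
    hence f1: "f \<in> inv_seqs_000 (Suc n)" and d: "dbl (Suc n) f" by (auto simp: G_def)
    from f1 have "length f = Suc n" by (rule len_A)
    then obtain e x where fe: "f = e @ [x]" and le: "length e = n"
      by (metis length_Suc_conv_rev)
    have "x = e!(n-1)" using d fe le assms by (auto simp: dbl_def nth_append)
    thus "f \<in> (\<lambda>(e,x). e@[x]) ` (SIGMA e: ?S - G n. {e!(n-1)})"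
      using f1 snoc_mem[OF le, of x] fe by (force simp: G_def)
  next
    fix f assume "f \<in> (\<lambda>(e,x). e@[x]) ` (SIGMA e: ?S - G n. {e!(n-1)})"
    then obtain e where fe: "f = e @ [e!(n-1)]" and e: "e \<in> ?S" and nd: "\<not> dbl n e"
      by (auto simp: G_def)
    have le: "length e = n" by (rule len_A[OF e])
    have "\<forall>i<n. e!i < i+1" using e unfolding inv_seqs_000_def inv_seqs_def by auto
    moreover have "n-1 < n" using assms by simp
    ultimately have "e!(n-1) < n-1+1" by blast
    hence "e!(n-1) \<le> n" using assms by simp
    hence "f \<in> inv_seqs_000 (Suc n)" using snoc_mem[OF le, of "e!(n-1)"] fe e nd by simp
    moreover have "dbl (Suc n) f" using fe le assms by (auto simp: dbl_def nth_append)
    ultimately show "f \<in> G (Suc n)" by (simp add: G_def)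
  qed
  hence "card (G (Suc n)) = card (SIGMA e: ?S - G n. {e!(n-1)})"
    by (simp add: card_image[OF inj_snoc])
  also have "\<dots> = card (?S - G n)"
    by (subst card_SigmaI) (auto simp: finite_A)
  also have "\<dots> = card ?S - card (G n)"
    by (rule card_Diff_subset) (auto simp: G_def intro: finite_subset[OF _ finite_A])
  finally show ?thesis
    using card_mono[OF finite_A, of "G n" n] by (auto simp: G_def)
qed


lemma a0: "card (inv_seqs_000 0) = 1"
proof -
  have "inv_seqs_000 0 = {[]}" by (auto simp: inv_seqs_000_def inv_seqs_def)
  thus ?thesis by simp
qed

lemma g0: "card (G 0) = 0" by (simp add: G_def dbl_def)
lemma g1: "card (G 1) = 0" by (simp add: G_def dbl_def)

lemma a_rec:
  assumes "n \<ge> 1"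
  shows "real (card (inv_seqs_000 (n+2))) = real (n+1) * card (inv_seqs_000 (n+1)) + real n * card (inv_seqs_000 n)"
proof -
  have 1: "real (card (inv_seqs_000 (Suc (n+1)))) + card (G (n+1)) = real (n+2) * card (inv_seqs_000 (n+1))"
    using arg_cong[OF card_A_step[of "n+1"], of real] by (simp add: algebra_simps)
  have 2: "real (card (inv_seqs_000 (Suc n))) + card (G n) = real (n+1) * card (inv_seqs_000 n)"
    using arg_cong[OF card_A_step[of "n"], of real] by (simp add: algebra_simps)
  have 3: "real (card (G (Suc n))) + card (G n) = card (inv_seqs_000 n)"
    using arg_cong[OF G_step[OF assms], of real] by simp
  show ?thesis using 1 2 3 by (simp add: algebra_simps)
qed

lemma a1: "card (inv_seqs_000 1) = 1"
  using card_A_step[of 0] a0 g0 by simp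

lemma a2: "card (inv_seqs_000 2) = 2"
  using card_A_step[of 1] a1 g1 by (simp add: numeral_2_eq_2)

lemma main_aux:
  "real (n+1) * card (inv_seqs_000 (n+1)) = fact (n+2) - real (num_derangements (n+2)) \<and>
   real (n+2) * card (inv_seqs_000 (n+2)) = fact (n+3) - real (num_derangements (n+3))"
proof (induction n)
  case 0
  have d2: "num_derangements 2 = 1" using nd_rec[of 0] nd0 nd1 by (simp add: numeral_2_eq_2)
  have d3: "num_derangements 3 = 2" using nd_rec[of 1] d2 nd1 by (simp add: numeral_3_eq_3 numeral_2_eq_2)
  show ?case using a1 a2 d2 d3 by (simp add: fact_numeral numeral_2_eq_2 del: One_nat_def)
next
  case (Suc n)
  let ?a = "\<lambda>k. real (card (inv_seqs_000 k))"
  let ?d = "\<lambda>k. real (num_derangements k)"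
  have r: "?a (n+3) = real (n+2) * ?a (n+2) + real (n+1) * ?a (n+1)"
    using a_rec[of "n+1"] by (simp add: numeral_3_eq_3)
  have dr: "?d (n+4) = real (n+3) * (?d (n+3) + ?d (n+2))"
  proof -
    have e1: "n+4 = n+2+2" "n+3 = n+2+1" by simp_all
    have "num_derangements (n+4) = (n+3) * (num_derangements (n+3) + num_derangements (n+2))"
      unfolding e1 by (rule nd_rec)
    thus ?thesis by (simp only: of_nat_mult of_nat_add)
  qed
  have f4: "(fact (n+4) :: real) = real (n+4) * fact (n+3)"
  proof -
    have e: "n+4 = Suc (n+3)" by simp
    show ?thesis by (simp only: e fact_Suc)
  qed
  have f3: "(fact (n+3) :: real) = real (n+3) * fact (n+2)"
  proof -
    have e: "n+3 = Suc (n+2)" by simp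
    show ?thesis by (simp only: e fact_Suc)
  qed
  have "real (n+3) * ?a (n+3) = real (n+3) * (real (n+2) * ?a (n+2) + real (n+1) * ?a (n+1))"
    using r by simp
  also have "\<dots> = real (n+3) * ((fact (n+3) - ?d (n+3)) + (fact (n+2) - ?d (n+2)))"
    using Suc.IH by simp
  also have "\<dots> = fact (n+4) - ?d (n+4)"
    using f4 f3 dr by (simp add: algebra_simps)
  finally have P3: "real (n+3) * ?a (n+3) = fact (n+4) - ?d (n+4)" .
  have e: "Suc n + 1 = n+2" "Suc n + 2 = n+3" "Suc n + 3 = n + 4" by simp_all
  show ?case unfolding e using Suc.IH P3 by blast
qed

theorem mainTheorem9:
  fixes n :: nat
  assumes "n \<ge> 1"
  shows "real (card (inv_seqs_000 n))
           = (real (fact (n + 1)) - real (num_derangements (n + 1))) / real n"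
proof -
  obtain m where m: "n = m + 1" using assms by (metis add.commute le_Suc_ex)
  have "real n * card (inv_seqs_000 n) = fact (n+1) - real (num_derangements (n+1))"
    using main_aux[of m] m by (simp add: add.assoc)
  moreover have "real n > 0" using assms by simp
  ultimately show ?thesis by (simp add: field_simps)
qed

end
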